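(* Let $f:\mathbb{R}^m\to\mathbb{R}$ be $L$-smooth, and let $\nabla f_\xi(\cdot)$ satisfy $\mathbb{E}_\xi[\nabla f_\xi(x)]=\nabla f(x)$ and $\mathbb{E}_\xi\|\nabla f_\xi(x)-\nabla f(x)\|^2\le\rho^2$ for all $x$. Let $t\ge1$, $x_0\in\mathbb{R}^m$ fixed, and $x_{s+1}=x_s-\gamma\nabla f_{\xi_s}(x_s)$ for $s=0,\dots,t-1$, where each $\xi_s$ is drawn independently of $\xi_0,\dots,\xi_{s-1}$, and $0<\gamma\le\frac{1}{L(t-1)}$ (no restriction when $t=1$). Then $$\mathbb{E}\big[\langle\nabla f_{\xi_0}(x_0)-\nabla f(x_0),\nabla f(x_t)\rangle\big]\le3t\gamma L\rho^2.$$
   Context: $f$ is $L$-smooth means $\nabla f$ is $L$-Lipschitz. *)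

theory Defs
  imports "HOL-Analysis.Analysis" "HOL-Probability.Probability"
begin

fun sgd_iter :: "('b \<Rightarrow> 'a::real_vector \<Rightarrow> 'a) \<Rightarrow> real \<Rightarrow> 'a \<Rightarrow> (nat \<Rightarrow> 'b) \<Rightarrow> nat \<Rightarrow> 'a" where
  "sgd_iter g \<gamma> x0 \<omega> 0 = x0"
| "sgd_iter g \<gamma> x0 \<omega> (Suc s) =
     sgd_iter g \<gamma> x0 \<omega> s - \<gamma> *\<^sub>R g (\<omega> s) (sgd_iter g \<gamma> x0 \<omega> s)"

end

theory Submission
  imports Defs
begin


lemma sgd_iter_shift:
  "sgd_iter g \<gamma> z \<omega> (Suc n) = sgd_iter g \<gamma> (z - \<gamma> *\<^sub>R g (\<omega> 0) z) (\<lambda>i. \<omega> (Suc i)) n"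
  by (induction n) auto

lemma sgd_iter_case_nat:
  "sgd_iter g \<gamma> z (case_nat \<xi> \<omega>) (Suc n) = sgd_iter g \<gamma> (z - \<gamma> *\<^sub>R g \<xi> z) \<omega> n"
  by (simp only: sgd_iter_shift) (simp add: fun_eq_iff)

lemma sgd_iter_cong:
  "(\<And>i. i < n \<Longrightarrow> \<omega> i = \<omega>' i) \<Longrightarrow> sgd_iter g \<gamma> z \<omega> n = sgd_iter g \<gamma> z \<omega>' n"
  by (induction n) auto

lemma sq_sum_le: "(a + b)\<^sup>2 \<le> 2 * a\<^sup>2 + 2 * (b::real)\<^sup>2"
proof -
  have "0 \<le> (a - b)\<^sup>2" by simp
  moreover have "(a + b)\<^sup>2 = a\<^sup>2 + b\<^sup>2 + 2 * a * b" by (rule power2_sum)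
  moreover have "(a - b)\<^sup>2 = a\<^sup>2 + b\<^sup>2 - 2 * a * b" by (rule power2_diff)
  ultimately show ?thesis by linarith
qed

lemma aux_alg: "B * (q * N + k) + k * S = (B * q) * N + k * (S + (B::real))"
  by (simp add: algebra_simps)

lemma numeric:
  fixes c :: real
  assumes c0: "0 \<le> c" and cn: "c * real n \<le> 1"
  shows "(1 + c) ^ (2 * n) + 4 * (\<Sum>k<n. (1 + c) ^ (2 * k)) \<le> 9 * (real n + 1)\<^sup>2"
proof -
  have "(\<Sum>k<n. (1 + c) ^ (2 * k)) \<le> of_nat (card {..<n}) * (1 + c) ^ (2 * n)"
    by (rule sum_bounded_above) (use c0 in \<open>auto intro: power_increasing\<close>)
  then have S: "(\<Sum>k<n. (1 + c) ^ (2 * k)) \<le> real n * (1 + c) ^ (2 * n)" by simp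
  have "(1 + c) ^ n \<le> (exp c) ^ n"
    using c0 by (intro power_mono) auto
  also have "\<dots> = exp (real n * c)" by (simp add: exp_of_nat_mult)
  also have "\<dots> \<le> exp 1" using cn by (simp add: mult.commute)
  also have "\<dots> \<le> 3" by (rule exp_le)
  finally have E: "(1 + c) ^ n \<le> 3" .
  have "(1 + c) ^ (2 * n) = ((1 + c) ^ n)\<^sup>2" by (simp add: power_mult[symmetric] mult.commute)
  also have "\<dots> \<le> 3\<^sup>2" using E c0 by (intro power_mono) auto
  finally have E2: "(1 + c) ^ (2 * n) \<le> 9" by simp
  show ?thesis
  proof (cases "n = 0")
    case True then show ?thesis by simp
  next
    case n0: False
    show ?thesis
    proof (cases "n = 1")
      case True
      then have "c \<le> 1" using cn by simp
      then have "(1 + c)\<^sup>2 \<le> 2\<^sup>2" using c0 by (intro power_mono) auto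
      then show ?thesis using True by simp
    next
      case False
      with n0 have n2: "2 \<le> real n" by linarith
      have "(1 + c) ^ (2 * n) + 4 * (\<Sum>k<n. (1 + c) ^ (2 * k)) \<le> (1 + c) ^ (2 * n) + 4 * (real n * (1 + c) ^ (2 * n))"
        using S by simp
      also have "\<dots> = (1 + 4 * real n) * (1 + c) ^ (2 * n)" by (simp add: algebra_simps)
      also have "\<dots> \<le> (1 + 4 * real n) * 9" using E2 by (intro mult_left_mono) auto
      also have "\<dots> \<le> 9 * (real n + 1)\<^sup>2"
      proof -
        have "2 * real n \<le> real n * real n" using n2 by (intro mult_right_mono) auto
        then show ?thesis by (simp add: power2_eq_square algebra_simps)
      qed
      finally show ?thesis .
    qed
  qed
qed

locale sgd =
  fixes grad :: "'a::euclidean_space \<Rightarrow> 'a"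
    and D :: "'b measure"
    and g :: "'b \<Rightarrow> 'a \<Rightarrow> 'a"
    and L \<rho> \<gamma> :: real
  assumes smooth: "L-lipschitz_on UNIV grad"
    and D: "prob_space D"
    and g_meas: "(\<lambda>(\<xi>, x). g \<xi> x) \<in> borel_measurable (D \<Otimes>\<^sub>M borel)"
    and unbiased: "\<And>x. has_bochner_integral D (\<lambda>\<xi>. g \<xi> x) (grad x)"
    and variance: "\<And>x. (\<integral>\<^sup>+ \<xi>. ennreal ((norm (g \<xi> x - grad x))\<^sup>2) \<partial>D) \<le> ennreal (\<rho>\<^sup>2)"
    and \<gamma>_pos: "0 < \<gamma>"

sublocale sgd \<subseteq> SQ: sequence_space D
  unfolding sequence_space_def product_prob_space_def product_prob_space_axioms_def product_sigma_finite_def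
  using D prob_space_imp_sigma_finite by blast

context sgd
begin

lemma L_nonneg: "0 \<le> L" using smooth lipschitz_on_nonneg by blast

lemma grad_lip: "norm (grad x - grad y) \<le> L * norm (x - y)"
  using smooth lipschitz_on_normD by blast

lemma grad_meas[measurable]: "grad \<in> borel_measurable borel"
  using smooth by (intro borel_measurable_continuous_onI lipschitz_on_continuous_on)

lemma g_meas':
  assumes "f \<in> measurable M D" "h \<in> borel_measurable M"
  shows "(\<lambda>x. g (f x) (h x)) \<in> borel_measurable M"
  using measurable_compose[OF measurable_Pair[OF assms] g_meas] by simp

lemma sgd_meas:
  assumes "{..<n} \<subseteq> I" "f \<in> borel_measurable M" "h \<in> measurable M (PiM I (\<lambda>_. D))"
  shows "(\<lambda>x. sgd_iter g \<gamma> (f x) (h x) n) \<in> borel_measurable M"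
  using assms(1)
proof (induction n)
  case 0 then show ?case using assms by simp
next
  case (Suc n)
  have "{..<n} \<subseteq> I" using Suc.prems by auto
  then have IH: "(\<lambda>x. sgd_iter g \<gamma> (f x) (h x) n) \<in> borel_measurable M" using Suc.IH by auto
  have "n \<in> I" using Suc by auto
  then have c: "(\<lambda>x. h x n) \<in> measurable M D"
    using measurable_compose[OF assms(3) measurable_component_singleton] by auto
  have "(\<lambda>x. g (h x n) (sgd_iter g \<gamma> (f x) (h x) n)) \<in> borel_measurable M" by (rule g_meas'[OF c IH])
  then show ?case
    by (simp only: sgd_iter.simps) (intro borel_measurable_diff borel_measurable_scaleR borel_measurable_const IH)
qed

lemma PiM_iter': "distr (D \<Otimes>\<^sub>M SQ.S) SQ.S (\<lambda>(s, \<omega>). case_nat s \<omega>) = SQ.S"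
  by (rule SQ.PiM_iter)

interpretation PS: pair_prob_space D SQ.S
  by unfold_locales

lemma case_nat_meas[measurable]: "(\<lambda>(s, \<omega>). case_nat s \<omega>) \<in> measurable (D \<Otimes>\<^sub>M SQ.S) SQ.S"
  by measurable

lemma nn_S_decomp:
  assumes [measurable]: "f \<in> borel_measurable SQ.S"
  shows "(\<integral>\<^sup>+\<omega>. f \<omega> \<partial>SQ.S) = (\<integral>\<^sup>+\<xi>. \<integral>\<^sup>+\<omega>. f (case_nat \<xi> \<omega>) \<partial>SQ.S \<partial>D)"
proof -
  have "(\<integral>\<^sup>+\<omega>. f \<omega> \<partial>SQ.S) = (\<integral>\<^sup>+\<omega>. f \<omega> \<partial>distr (D \<Otimes>\<^sub>M SQ.S) SQ.S (\<lambda>(s, \<omega>). case_nat s \<omega>))"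
    by (simp only: PiM_iter')
  also have "\<dots> = (\<integral>\<^sup>+p. f (case_prod case_nat p) \<partial>(D \<Otimes>\<^sub>M SQ.S))"
    by (rule nn_integral_distr) measurable
  also have "\<dots> = (\<integral>\<^sup>+\<xi>. \<integral>\<^sup>+\<omega>. f (case_nat \<xi> \<omega>) \<partial>SQ.S \<partial>D)"
    using measurable_compose[OF case_nat_meas assms]
    by (subst SQ.P.nn_integral_fst[symmetric]) simp_all
  finally show ?thesis .
qed

lemma Dconst_int: "integrable D (\<lambda>_. c)"
  by (rule finite_measure.integrable_const[OF prob_space.finite_measure[OF D]])

lemma Dconst_integral: "(\<integral>_. c \<partial>D) = (c::'c::{banach,second_countable_topology})"
  using prob_space.prob_space[OF D] by simp

lemma g_int: "integrable D (\<lambda>\<xi>. g \<xi> x)"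
  using unbiased has_bochner_integral_integrable integrable.intros by blast

lemma g_integral: "(\<integral>\<xi>. g \<xi> x \<partial>D) = grad x"
  using unbiased has_bochner_integral_integral_eq by blast

lemma noise_meas[measurable]: "(\<lambda>\<xi>. g \<xi> x) \<in> borel_measurable D"
  by (rule g_meas'[OF measurable_ident_sets[OF refl] borel_measurable_const])

lemma noise_sq_int: "integrable D (\<lambda>\<xi>. (norm (g \<xi> x - grad x))\<^sup>2)"
proof (rule integrableI_bounded)
  show "(\<lambda>\<xi>. (norm (g \<xi> x - grad x))\<^sup>2) \<in> borel_measurable D" by measurable
  have "(\<integral>\<^sup>+ \<xi>. ennreal (norm ((norm (g \<xi> x - grad x))\<^sup>2)) \<partial>D)
      = (\<integral>\<^sup>+ \<xi>. ennreal ((norm (g \<xi> x - grad x))\<^sup>2) \<partial>D)" by simp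
  also have "\<dots> \<le> ennreal (\<rho>\<^sup>2)" by (rule variance)
  also have "\<dots> < \<infinity>" by simp
  finally show "(\<integral>\<^sup>+ \<xi>. ennreal (norm ((norm (g \<xi> x - grad x))\<^sup>2)) \<partial>D) < \<infinity>" .
qed

lemma noise_sq_le: "(\<integral>\<xi>. (norm (g \<xi> x - grad x))\<^sup>2 \<partial>D) \<le> \<rho>\<^sup>2"
proof -
  have "ennreal (\<integral>\<xi>. (norm (g \<xi> x - grad x))\<^sup>2 \<partial>D) = (\<integral>\<^sup>+ \<xi>. ennreal ((norm (g \<xi> x - grad x))\<^sup>2) \<partial>D)"
    by (rule nn_integral_eq_integral[symmetric]) (auto intro: noise_sq_int)
  also have "\<dots> \<le> ennreal (\<rho>\<^sup>2)" by (rule variance)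
  finally show ?thesis by (simp add: ennreal_le_iff)
qed

lemma one_step:
  "(\<integral>\<^sup>+\<xi>. ennreal ((norm ((z1 - \<gamma> *\<^sub>R g \<xi> z1) - (z2 - \<gamma> *\<^sub>R g \<xi> z2)))\<^sup>2) \<partial>D)
     \<le> ennreal ((1 + \<gamma> * L)\<^sup>2 * (norm (z1 - z2))\<^sup>2 + 4 * \<gamma>\<^sup>2 * \<rho>\<^sup>2)"
proof -
  define u where "u = z1 - z2 - \<gamma> *\<^sub>R (grad z1 - grad z2)"
  define w where "w = (\<lambda>\<xi>. (g \<xi> z1 - grad z1) - (g \<xi> z2 - grad z2))"
  have vec: "(z1 - \<gamma> *\<^sub>R g \<xi> z1) - (z2 - \<gamma> *\<^sub>R g \<xi> z2) = u - \<gamma> *\<^sub>R w \<xi>" for \<xi>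
    by (simp add: u_def w_def algebra_simps)
  have sq: "(norm (u - \<gamma> *\<^sub>R w \<xi>))\<^sup>2 = (norm u)\<^sup>2 - 2 * \<gamma> * (u \<bullet> w \<xi>) + \<gamma>\<^sup>2 * (norm (w \<xi>))\<^sup>2" for \<xi>
    unfolding power2_norm_eq_inner by (simp add: inner_diff_left inner_diff_right algebra_simps power2_eq_square inner_commute)
  have w_meas[measurable]: "w \<in> borel_measurable D" unfolding w_def by measurable
  have w_int: "integrable D w" unfolding w_def using g_int by auto
  have w_integral: "(\<integral>\<xi>. w \<xi> \<partial>D) = 0"
  proof -
    have "(\<integral>\<xi>. w \<xi> \<partial>D) = (\<integral>\<xi>. g \<xi> z1 - grad z1 \<partial>D) - (\<integral>\<xi>. g \<xi> z2 - grad z2 \<partial>D)"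
      unfolding w_def using g_int by (intro Bochner_Integration.integral_diff Bochner_Integration.integrable_diff Dconst_int)
    also have "\<dots> = 0" using g_int by (simp add: Bochner_Integration.integral_diff g_integral Dconst_integral SQ.M.prob_space)
    finally show ?thesis .
  qed
  have wbound: "(norm (w \<xi>))\<^sup>2 \<le> 2 * (norm (g \<xi> z1 - grad z1))\<^sup>2 + 2 * (norm (g \<xi> z2 - grad z2))\<^sup>2" for \<xi>
  proof -
    have "norm (w \<xi>) \<le> norm (g \<xi> z1 - grad z1) + norm (g \<xi> z2 - grad z2)"
      unfolding w_def by (rule norm_triangle_ineq4)
    then have "(norm (w \<xi>))\<^sup>2 \<le> (norm (g \<xi> z1 - grad z1) + norm (g \<xi> z2 - grad z2))\<^sup>2"
      by (simp add: power_mono)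
    also have "\<dots> \<le> 2 * (norm (g \<xi> z1 - grad z1))\<^sup>2 + 2 * (norm (g \<xi> z2 - grad z2))\<^sup>2"
      by (rule sq_sum_le)
    finally show ?thesis .
  qed
  have bint: "integrable D (\<lambda>\<xi>. 2 * (norm (g \<xi> z1 - grad z1))\<^sup>2 + 2 * (norm (g \<xi> z2 - grad z2))\<^sup>2)"
    using noise_sq_int by auto
  have wsq_int: "integrable D (\<lambda>\<xi>. (norm (w \<xi>))\<^sup>2)"
  proof (rule Bochner_Integration.integrable_bound[OF bint])
    show "(\<lambda>\<xi>. (norm (w \<xi>))\<^sup>2) \<in> borel_measurable D" by measurable
    show "AE \<xi> in D. norm ((norm (w \<xi>))\<^sup>2) \<le> norm (2 * (norm (g \<xi> z1 - grad z1))\<^sup>2 + 2 * (norm (g \<xi> z2 - grad z2))\<^sup>2)"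
    proof (rule AE_I2)
      fix \<xi>
      have "0 \<le> (norm (w \<xi>))\<^sup>2" by simp
      with wbound[of \<xi>] show "norm ((norm (w \<xi>))\<^sup>2) \<le> norm (2 * (norm (g \<xi> z1 - grad z1))\<^sup>2 + 2 * (norm (g \<xi> z2 - grad z2))\<^sup>2)"
        by simp
    qed
  qed
  have wsq_le: "(\<integral>\<xi>. (norm (w \<xi>))\<^sup>2 \<partial>D) \<le> 4 * \<rho>\<^sup>2"
  proof -
    have "(\<integral>\<xi>. (norm (w \<xi>))\<^sup>2 \<partial>D) \<le> (\<integral>\<xi>. 2 * (norm (g \<xi> z1 - grad z1))\<^sup>2 + 2 * (norm (g \<xi> z2 - grad z2))\<^sup>2 \<partial>D)"
      by (rule integral_mono[OF wsq_int bint wbound])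
    also have "\<dots> = 2 * (\<integral>\<xi>. (norm (g \<xi> z1 - grad z1))\<^sup>2 \<partial>D) + 2 * (\<integral>\<xi>. (norm (g \<xi> z2 - grad z2))\<^sup>2 \<partial>D)"
      using noise_sq_int by simp
    also have "\<dots> \<le> 4 * \<rho>\<^sup>2" using noise_sq_le[of z1] noise_sq_le[of z2] by simp
    finally show ?thesis .
  qed
  have f_int: "integrable D (\<lambda>\<xi>. (norm u)\<^sup>2 - 2 * \<gamma> * (u \<bullet> w \<xi>) + \<gamma>\<^sup>2 * (norm (w \<xi>))\<^sup>2)"
  proof (intro Bochner_Integration.integrable_add Bochner_Integration.integrable_diff)
    show "integrable D (\<lambda>\<xi>. (norm u)\<^sup>2)" by (rule Dconst_int)
    show "integrable D (\<lambda>\<xi>. 2 * \<gamma> * (u \<bullet> w \<xi>))" using w_int by (intro integrable_mult_right integrable_inner_right)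
    show "integrable D (\<lambda>\<xi>. \<gamma>\<^sup>2 * (norm (w \<xi>))\<^sup>2)" using wsq_int by (intro integrable_mult_right)
  qed
  have f_integral: "(\<integral>\<xi>. (norm u)\<^sup>2 - 2 * \<gamma> * (u \<bullet> w \<xi>) + \<gamma>\<^sup>2 * (norm (w \<xi>))\<^sup>2 \<partial>D)
      = (norm u)\<^sup>2 + \<gamma>\<^sup>2 * (\<integral>\<xi>. (norm (w \<xi>))\<^sup>2 \<partial>D)"
  proof -
    have i1: "integrable D (\<lambda>\<xi>. 2 * \<gamma> * (u \<bullet> w \<xi>))" using w_int by (intro integrable_mult_right integrable_inner_right)
    have i2: "integrable D (\<lambda>\<xi>. \<gamma>\<^sup>2 * (norm (w \<xi>))\<^sup>2)" using wsq_int by (intro integrable_mult_right)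
    have i3: "integrable D (\<lambda>\<xi>. (norm u)\<^sup>2)" by (rule Dconst_int)
    have "(\<integral>\<xi>. (norm u)\<^sup>2 - 2 * \<gamma> * (u \<bullet> w \<xi>) + \<gamma>\<^sup>2 * (norm (w \<xi>))\<^sup>2 \<partial>D)
       = (\<integral>\<xi>. (norm u)\<^sup>2 - 2 * \<gamma> * (u \<bullet> w \<xi>) \<partial>D) + (\<integral>\<xi>. \<gamma>\<^sup>2 * (norm (w \<xi>))\<^sup>2 \<partial>D)"
      using i1 i2 i3 by (intro Bochner_Integration.integral_add Bochner_Integration.integrable_diff)
    also have "(\<integral>\<xi>. (norm u)\<^sup>2 - 2 * \<gamma> * (u \<bullet> w \<xi>) \<partial>D) = (\<integral>\<xi>. (norm u)\<^sup>2 \<partial>D) - (\<integral>\<xi>. 2 * \<gamma> * (u \<bullet> w \<xi>) \<partial>D)"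
      using i3 i1 by (rule Bochner_Integration.integral_diff)
    also have "(\<integral>\<xi>. 2 * \<gamma> * (u \<bullet> w \<xi>) \<partial>D) = 2 * \<gamma> * (u \<bullet> (\<integral>\<xi>. w \<xi> \<partial>D))"
      using w_int by simp
    also have "(\<integral>\<xi>. (norm u)\<^sup>2 \<partial>D) = (norm u)\<^sup>2" by (simp add: Dconst_integral SQ.M.prob_space)
    also have "(\<integral>\<xi>. \<gamma>\<^sup>2 * (norm (w \<xi>))\<^sup>2 \<partial>D) = \<gamma>\<^sup>2 * (\<integral>\<xi>. (norm (w \<xi>))\<^sup>2 \<partial>D)" by simp
    finally show ?thesis by (simp add: w_integral)
  qed
  have unorm: "norm u \<le> (1 + \<gamma> * L) * norm (z1 - z2)"
  proof -
    have "norm u \<le> norm (z1 - z2) + norm (\<gamma> *\<^sub>R (grad z1 - grad z2))"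
      unfolding u_def by (rule norm_triangle_ineq4)
    also have "\<dots> \<le> norm (z1 - z2) + \<gamma> * (L * norm (z1 - z2))"
      using \<gamma>_pos grad_lip[of z1 z2] by (simp add: mult_left_mono)
    finally show ?thesis by (simp add: algebra_simps)
  qed
  have unorm2: "(norm u)\<^sup>2 \<le> (1 + \<gamma> * L)\<^sup>2 * (norm (z1 - z2))\<^sup>2"
    using power_mono[OF unorm norm_ge_zero, of 2] by (simp add: power_mult_distrib)
  have nn: "AE \<xi> in D. 0 \<le> (norm u)\<^sup>2 - 2 * \<gamma> * (u \<bullet> w \<xi>) + \<gamma>\<^sup>2 * (norm (w \<xi>))\<^sup>2"
  proof (rule AE_I2)
    fix \<xi> show "0 \<le> (norm u)\<^sup>2 - 2 * \<gamma> * (u \<bullet> w \<xi>) + \<gamma>\<^sup>2 * (norm (w \<xi>))\<^sup>2"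
      using sq[of \<xi>] zero_le_power2[of "norm (u - \<gamma> *\<^sub>R w \<xi>)"] by linarith
  qed
  have "(\<integral>\<^sup>+\<xi>. ennreal ((norm ((z1 - \<gamma> *\<^sub>R g \<xi> z1) - (z2 - \<gamma> *\<^sub>R g \<xi> z2)))\<^sup>2) \<partial>D)
      = (\<integral>\<^sup>+\<xi>. ennreal ((norm u)\<^sup>2 - 2 * \<gamma> * (u \<bullet> w \<xi>) + \<gamma>\<^sup>2 * (norm (w \<xi>))\<^sup>2) \<partial>D)"
    by (simp only: vec sq)
  also have "\<dots> = ennreal (\<integral>\<xi>. (norm u)\<^sup>2 - 2 * \<gamma> * (u \<bullet> w \<xi>) + \<gamma>\<^sup>2 * (norm (w \<xi>))\<^sup>2 \<partial>D)"
    by (rule nn_integral_eq_integral[OF f_int nn])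
  also have "\<dots> = ennreal ((norm u)\<^sup>2 + \<gamma>\<^sup>2 * (\<integral>\<xi>. (norm (w \<xi>))\<^sup>2 \<partial>D))"
    by (simp only: f_integral)
  also have "\<dots> \<le> ennreal ((1 + \<gamma> * L)\<^sup>2 * (norm (z1 - z2))\<^sup>2 + 4 * \<gamma>\<^sup>2 * \<rho>\<^sup>2)"
  proof (intro ennreal_leI)
    have "\<gamma>\<^sup>2 * (\<integral>\<xi>. (norm (w \<xi>))\<^sup>2 \<partial>D) \<le> \<gamma>\<^sup>2 * (4 * \<rho>\<^sup>2)"
      using wsq_le by (intro mult_left_mono) auto
    then show "(norm u)\<^sup>2 + \<gamma>\<^sup>2 * (\<integral>\<xi>. (norm (w \<xi>))\<^sup>2 \<partial>D) \<le> (1 + \<gamma> * L)\<^sup>2 * (norm (z1 - z2))\<^sup>2 + 4 * \<gamma>\<^sup>2 * \<rho>\<^sup>2"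
      using unorm2 by linarith
  qed
  finally show ?thesis .
qed

lemma sgd_meas_S: "(\<lambda>\<omega>. sgd_iter g \<gamma> z \<omega> n) \<in> borel_measurable SQ.S"
  by (rule sgd_meas[of n UNIV]) auto

lemma coupling:
  "(\<integral>\<^sup>+\<omega>. ennreal ((norm (sgd_iter g \<gamma> z1 \<omega> n - sgd_iter g \<gamma> z2 \<omega> n))\<^sup>2) \<partial>SQ.S)
     \<le> ennreal ((1 + \<gamma> * L) ^ (2 * n) * (norm (z1 - z2))\<^sup>2 + 4 * \<gamma>\<^sup>2 * \<rho>\<^sup>2 * (\<Sum>k<n. (1 + \<gamma> * L) ^ (2 * k)))"
proof (induction n arbitrary: z1 z2)
  case 0
  show ?case by (simp add: SQ.P.emeasure_space_1)
next
  case (Suc n)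
  define B where "B = (1 + \<gamma> * L) ^ (2 * n)"
  define C where "C = 4 * \<gamma>\<^sup>2 * \<rho>\<^sup>2 * (\<Sum>k<n. (1 + \<gamma> * L) ^ (2 * k))"
  define R where "R = (1 + \<gamma> * L)\<^sup>2 * (norm (z1 - z2))\<^sup>2 + 4 * \<gamma>\<^sup>2 * \<rho>\<^sup>2"
  define Y where "Y = (\<lambda>\<xi>. (norm ((z1 - \<gamma> *\<^sub>R g \<xi> z1) - (z2 - \<gamma> *\<^sub>R g \<xi> z2)))\<^sup>2)"
  have cL: "0 \<le> \<gamma> * L" using \<gamma>_pos L_nonneg by simp
  have B0: "0 \<le> B" unfolding B_def using cL by simp
  have C0: "0 \<le> C" unfolding C_def using cL by (intro mult_nonneg_nonneg sum_nonneg) auto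
  have Y0: "0 \<le> Y \<xi>" for \<xi> unfolding Y_def by simp
  have Ymeas[measurable]: "Y \<in> borel_measurable D" unfolding Y_def by measurable
  have m1[measurable]: "(\<lambda>\<omega>. sgd_iter g \<gamma> z1 \<omega> (Suc n)) \<in> borel_measurable SQ.S" by (rule sgd_meas_S)
  have m2[measurable]: "(\<lambda>\<omega>. sgd_iter g \<gamma> z2 \<omega> (Suc n)) \<in> borel_measurable SQ.S" by (rule sgd_meas_S)
  have meas: "(\<lambda>\<omega>. ennreal ((norm (sgd_iter g \<gamma> z1 \<omega> (Suc n) - sgd_iter g \<gamma> z2 \<omega> (Suc n)))\<^sup>2)) \<in> borel_measurable SQ.S"
    by measurable
  have "(\<integral>\<^sup>+\<omega>. ennreal ((norm (sgd_iter g \<gamma> z1 \<omega> (Suc n) - sgd_iter g \<gamma> z2 \<omega> (Suc n)))\<^sup>2) \<partial>SQ.S)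
      = (\<integral>\<^sup>+\<xi>. \<integral>\<^sup>+\<omega>. ennreal ((norm (sgd_iter g \<gamma> (z1 - \<gamma> *\<^sub>R g \<xi> z1) \<omega> n - sgd_iter g \<gamma> (z2 - \<gamma> *\<^sub>R g \<xi> z2) \<omega> n))\<^sup>2) \<partial>SQ.S \<partial>D)"
    by (simp only: nn_S_decomp[OF meas] sgd_iter_case_nat)
  also have "\<dots> \<le> (\<integral>\<^sup>+\<xi>. ennreal (B * Y \<xi> + C) \<partial>D)"
    unfolding B_def C_def Y_def by (intro nn_integral_mono Suc.IH)
  also have "\<dots> = (\<integral>\<^sup>+\<xi>. ennreal B * ennreal (Y \<xi>) + ennreal C \<partial>D)"
    using B0 C0 Y0 by (intro nn_integral_cong) (simp add: ennreal_plus ennreal_mult)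
  also have "\<dots> = ennreal B * (\<integral>\<^sup>+\<xi>. ennreal (Y \<xi>) \<partial>D) + ennreal C"
    by (simp add: nn_integral_add nn_integral_cmult SQ.M.emeasure_space_1)
  also have "\<dots> \<le> ennreal B * ennreal R + ennreal C"
    unfolding Y_def R_def by (intro add_right_mono mult_left_mono one_step) auto
  also have "\<dots> = ennreal (B * R + C)"
    using B0 C0 R_def by (simp add: ennreal_plus ennreal_mult)
  also have "B * R + C = (1 + \<gamma> * L) ^ (2 * Suc n) * (norm (z1 - z2))\<^sup>2 + 4 * \<gamma>\<^sup>2 * \<rho>\<^sup>2 * (\<Sum>k<Suc n. (1 + \<gamma> * L) ^ (2 * k))"
  proof -
    have e1: "(1 + \<gamma> * L) ^ (2 * Suc n) = (1 + \<gamma> * L) ^ (2 * n) * (1 + \<gamma> * L)\<^sup>2"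
      by (metis mult_Suc_right power_add mult.commute)
    have e2: "(\<Sum>k<Suc n. (1 + \<gamma> * L) ^ (2 * k)) = (\<Sum>k<n. (1 + \<gamma> * L) ^ (2 * k)) + (1 + \<gamma> * L) ^ (2 * n)"
      by simp
    show ?thesis unfolding B_def C_def R_def e1 e2
      by (rule aux_alg)
  qed
  finally show ?case .
qed

lemma main:
  fixes x0 :: 'a and t :: nat
  assumes t: "t \<ge> 1" and \<gamma>_le: "\<gamma> * L * (real t - 1) \<le> 1"
  shows "(\<integral>\<omega>. (g (\<omega> 0) x0 - grad x0) \<bullet> grad (sgd_iter g \<gamma> x0 \<omega> t) \<partial>(PiM {..<t} (\<lambda>_. D)))
         \<le> 3 * real t * \<gamma> * L * \<rho>\<^sup>2"
proof -
  obtain n where tn: "t = Suc n" using t by (cases t) auto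
  define e where "e = (\<lambda>\<xi>. g \<xi> x0 - grad x0)"
  define zs where "zs = x0 - \<gamma> *\<^sub>R grad x0"
  define z where "z = (\<lambda>\<xi>. x0 - \<gamma> *\<^sub>R g \<xi> x0)"
  define F where "F = (\<lambda>\<omega>. e (\<omega> 0) \<bullet> grad (sgd_iter g \<gamma> x0 \<omega> t))"
  define \<Phi> where "\<Phi> = (\<lambda>\<xi> \<omega>. e \<xi> \<bullet> grad (sgd_iter g \<gamma> (z \<xi>) \<omega> n))"
  define \<Delta> where "\<Delta> = (\<lambda>\<xi> \<omega>. sgd_iter g \<gamma> (z \<xi>) \<omega> n - sgd_iter g \<gamma> zs \<omega> n)"
  define r where "r = 3 * real t * \<gamma> * L * \<rho>\<^sup>2"
  have r0: "0 \<le> r" unfolding r_def using \<gamma>_pos L_nonneg by simp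
  have e_meas[measurable]: "e \<in> borel_measurable D" unfolding e_def by measurable
  have e_int: "integrable D e" unfolding e_def using g_int
    by (intro Bochner_Integration.integrable_diff Dconst_int)
  have e_integral: "(\<integral>\<xi>. e \<xi> \<partial>D) = 0"
    unfolding e_def using g_int by (simp add: Bochner_Integration.integral_diff Dconst_int g_integral Dconst_integral SQ.M.prob_space)
  have F_meas: "F \<in> borel_measurable (PiM I (\<lambda>_. D))" if I: "{..<t} \<subseteq> I" for I
  proof -
    have "0 \<in> I" using I tn by auto
    then have c0: "(\<lambda>\<omega>. \<omega> 0) \<in> measurable (PiM I (\<lambda>_. D)) D" by (rule measurable_component_singleton)
    have m1: "(\<lambda>\<omega>. e (\<omega> 0)) \<in> borel_measurable (PiM I (\<lambda>_. D))" using measurable_compose[OF c0 e_meas] .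
    have "(\<lambda>\<omega>. sgd_iter g \<gamma> x0 \<omega> t) \<in> borel_measurable (PiM I (\<lambda>_. D))" by (rule sgd_meas[OF I]) auto
    then have m2: "(\<lambda>\<omega>. grad (sgd_iter g \<gamma> x0 \<omega> t)) \<in> borel_measurable (PiM I (\<lambda>_. D))"
      using measurable_compose[OF _ grad_meas] by blast
    show ?thesis unfolding F_def using m1 m2 by (rule borel_measurable_inner)
  qed
  have FR: "F (restrict \<omega> {..<t}) = F \<omega>" for \<omega>
  proof -
    have "sgd_iter g \<gamma> x0 (restrict \<omega> {..<t}) t = sgd_iter g \<gamma> x0 \<omega> t" by (rule sgd_iter_cong) simp
    then show ?thesis unfolding F_def using tn by simp
  qed
  have step1: "integral\<^sup>L (PiM {..<t} (\<lambda>_. D)) F = integral\<^sup>L SQ.S F"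
  proof -
    have "integral\<^sup>L (PiM {..<t} (\<lambda>_. D)) F = integral\<^sup>L (distr SQ.S (PiM {..<t} (\<lambda>_. D)) (\<lambda>x. restrict x {..<t})) F"
      by (simp only: SQ.distr_PiM_restrict_finite[OF finite_lessThan subset_UNIV])
    also have "\<dots> = (\<integral>\<omega>. F (restrict \<omega> {..<t}) \<partial>SQ.S)"
      by (rule integral_distr) (rule measurable_restrict_subset, simp, rule F_meas, simp)
    also have "\<dots> = integral\<^sup>L SQ.S F" by (simp only: FR)
    finally show ?thesis .
  qed
  have step2: "integral\<^sup>L SQ.S F = integral\<^sup>L (D \<Otimes>\<^sub>M SQ.S) (case_prod \<Phi>)"
  proof -
    have "integral\<^sup>L SQ.S F = integral\<^sup>L (distr (D \<Otimes>\<^sub>M SQ.S) SQ.S (\<lambda>(s, \<omega>). case_nat s \<omega>)) F"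
      by (simp only: PiM_iter')
    also have "\<dots> = (\<integral>p. F (case_prod case_nat p) \<partial>(D \<Otimes>\<^sub>M SQ.S))"
      by (rule integral_distr) (rule case_nat_meas, rule F_meas, simp)
    also have "\<dots> = integral\<^sup>L (D \<Otimes>\<^sub>M SQ.S) (case_prod \<Phi>)"
      by (rule Bochner_Integration.integral_cong[OF refl])
         (auto simp: F_def \<Phi>_def tn sgd_iter_case_nat z_def e_def simp del: sgd_iter.simps split: prod.split)
    finally show ?thesis .
  qed
  have "integral\<^sup>L (D \<Otimes>\<^sub>M SQ.S) (case_prod \<Phi>) \<le> r"
  proof (cases "integrable (D \<Otimes>\<^sub>M SQ.S) (case_prod \<Phi>)")
    case False
    then show ?thesis using r0 by (simp add: not_integrable_integral_eq)
  next
    case \<Phi>int: True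
    have eq: "integral\<^sup>L (D \<Otimes>\<^sub>M SQ.S) (case_prod \<Phi>) = (\<integral>\<omega>. (\<integral>\<xi>. \<Phi> \<xi> \<omega> \<partial>D) \<partial>SQ.S)"
      by (rule PS.integral_snd[OF \<Phi>int, symmetric])
    have AEint: "AE \<omega> in SQ.S. integrable D (\<lambda>\<xi>. \<Phi> \<xi> \<omega>)"
      by (rule PS.AE_integrable_snd[OF \<Phi>int])
    have pt: "ennreal (\<integral>\<xi>. \<Phi> \<xi> \<omega> \<partial>D) \<le> (\<integral>\<^sup>+\<xi>. ennreal (L * norm (e \<xi>) * norm (\<Delta> \<xi> \<omega>)) \<partial>D)"
      if \<Phi>i: "integrable D (\<lambda>\<xi>. \<Phi> \<xi> \<omega>)" for \<omega>
    proof -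
      define c where "c = grad (sgd_iter g \<gamma> zs \<omega> n)"
      have ec_int: "integrable D (\<lambda>\<xi>. e \<xi> \<bullet> c)" using e_int by auto
      have ec0: "(\<integral>\<xi>. e \<xi> \<bullet> c \<partial>D) = 0" using e_int e_integral by simp
      have k_int: "integrable D (\<lambda>\<xi>. \<Phi> \<xi> \<omega> - e \<xi> \<bullet> c)"
        using \<Phi>i ec_int by (rule Bochner_Integration.integrable_diff)
      have "(\<integral>\<xi>. \<Phi> \<xi> \<omega> \<partial>D) = (\<integral>\<xi>. \<Phi> \<xi> \<omega> - e \<xi> \<bullet> c \<partial>D)"
        using \<Phi>i ec_int ec0 by (simp add: Bochner_Integration.integral_diff)
      then have "ennreal (\<integral>\<xi>. \<Phi> \<xi> \<omega> \<partial>D) \<le> ennreal (norm (\<integral>\<xi>. \<Phi> \<xi> \<omega> - e \<xi> \<bullet> c \<partial>D))"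
        by (intro ennreal_leI) auto
      also have "\<dots> \<le> (\<integral>\<^sup>+\<xi>. norm (\<Phi> \<xi> \<omega> - e \<xi> \<bullet> c) \<partial>D)"
        by (rule integral_norm_bound_ennreal[OF k_int])
      also have "\<dots> \<le> (\<integral>\<^sup>+\<xi>. ennreal (L * norm (e \<xi>) * norm (\<Delta> \<xi> \<omega>)) \<partial>D)"
      proof (intro nn_integral_mono ennreal_leI)
        fix \<xi>
        have "\<Phi> \<xi> \<omega> - e \<xi> \<bullet> c = e \<xi> \<bullet> (grad (sgd_iter g \<gamma> (z \<xi>) \<omega> n) - grad (sgd_iter g \<gamma> zs \<omega> n))"
          unfolding \<Phi>_def c_def by (simp add: inner_diff_right)
        then have "norm (\<Phi> \<xi> \<omega> - e \<xi> \<bullet> c) \<le> norm (e \<xi>) * norm (grad (sgd_iter g \<gamma> (z \<xi>) \<omega> n) - grad (sgd_iter g \<gamma> zs \<omega> n))"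
          using Cauchy_Schwarz_ineq2 by (simp only: real_norm_def)
        also have "\<dots> \<le> norm (e \<xi>) * (L * norm (\<Delta> \<xi> \<omega>))"
          unfolding \<Delta>_def by (intro mult_left_mono grad_lip) auto
        also have "\<dots> = L * norm (e \<xi>) * norm (\<Delta> \<xi> \<omega>)" by (simp add: ac_simps)
        finally show "norm (\<Phi> \<xi> \<omega> - e \<xi> \<bullet> c) \<le> L * norm (e \<xi>) * norm (\<Delta> \<xi> \<omega>)" .
      qed
      finally show ?thesis .
    qed
    have z_meas: "(\<lambda>p. z (fst p)) \<in> borel_measurable (D \<Otimes>\<^sub>M SQ.S)"
      unfolding z_def using g_meas'[OF measurable_fst borel_measurable_const] by measurable
    have \<Delta>_meas: "(\<lambda>p. \<Delta> (fst p) (snd p)) \<in> borel_measurable (D \<Otimes>\<^sub>M SQ.S)"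
    proof -
      have a: "(\<lambda>p. sgd_iter g \<gamma> (z (fst p)) (snd p) n) \<in> borel_measurable (D \<Otimes>\<^sub>M SQ.S)"
        by (rule sgd_meas[OF _ z_meas measurable_snd]) auto
      have b: "(\<lambda>p. sgd_iter g \<gamma> zs (snd p) n) \<in> borel_measurable (D \<Otimes>\<^sub>M SQ.S)"
        by (rule sgd_meas[OF _ borel_measurable_const measurable_snd]) auto
      show ?thesis unfolding \<Delta>_def using a b by (rule borel_measurable_diff)
    qed
    have efst: "(\<lambda>p. e (fst p)) \<in> borel_measurable (D \<Otimes>\<^sub>M SQ.S)"
      using measurable_compose[OF measurable_fst e_meas] .
    have G_meas: "(\<lambda>p. ennreal (L * norm (e (fst p)) * norm (\<Delta> (fst p) (snd p)))) \<in> borel_measurable (D \<Otimes>\<^sub>M SQ.S)"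
      using efst \<Delta>_meas by measurable
    define lam where "lam = 3 * real t * \<gamma>"
    have lam0: "0 < lam" unfolding lam_def using \<gamma>_pos tn by simp
    define Bn where "Bn = (1 + \<gamma> * L) ^ (2 * n)"
    define Sm where "Sm = (\<Sum>k<n. (1 + \<gamma> * L) ^ (2 * k))"
    define C where "C = 4 * \<gamma>\<^sup>2 * \<rho>\<^sup>2 * Sm"
    define K1 where "K1 = L * lam / 2 + L / (2 * lam) * Bn * \<gamma>\<^sup>2"
    define K2 where "K2 = L / (2 * lam) * C"
    have cL: "0 \<le> \<gamma> * L" using \<gamma>_pos L_nonneg by simp
    have Bn0: "0 \<le> Bn" unfolding Bn_def using cL by simp
    have Sm0: "0 \<le> Sm" unfolding Sm_def using cL by (intro sum_nonneg) auto
    have C0: "0 \<le> C" unfolding C_def using Sm0 by simp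
    have K10: "0 \<le> K1" unfolding K1_def using L_nonneg lam0 Bn0 by simp
    have K20: "0 \<le> K2" unfolding K2_def using L_nonneg lam0 C0 by simp
    have inner: "(\<integral>\<^sup>+\<omega>. ennreal (L * norm (e \<xi>) * norm (\<Delta> \<xi> \<omega>)) \<partial>SQ.S) \<le> ennreal (K1 * (norm (e \<xi>))\<^sup>2 + K2)" for \<xi>
    proof -
      have amgm: "L * a * b \<le> (L * lam / 2) * a\<^sup>2 + (L / (2 * lam)) * b\<^sup>2" for a b :: real
      proof -
        have "0 \<le> (lam * a - b)\<^sup>2" by simp
        then have "2 * lam * a * b \<le> lam\<^sup>2 * a\<^sup>2 + b\<^sup>2" by (simp add: power2_eq_square algebra_simps)
        then have "L * (2 * lam * a * b) \<le> L * (lam\<^sup>2 * a\<^sup>2 + b\<^sup>2)" using L_nonneg by (rule mult_left_mono)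
        then have "(L * (2 * lam * a * b)) / (2 * lam) \<le> (L * (lam\<^sup>2 * a\<^sup>2 + b\<^sup>2)) / (2 * lam)"
          using lam0 by (intro divide_right_mono) auto
        then show ?thesis using lam0 by (simp add: field_simps power2_eq_square)
      qed
      have zdiff: "(norm (z \<xi> - zs))\<^sup>2 = \<gamma>\<^sup>2 * (norm (e \<xi>))\<^sup>2"
      proof -
        have "z \<xi> - zs = - (\<gamma> *\<^sub>R e \<xi>)" unfolding z_def zs_def e_def by (simp add: algebra_simps)
        then show ?thesis using \<gamma>_pos by (simp add: power_mult_distrib)
      qed
      have cpl: "(\<integral>\<^sup>+\<omega>. ennreal ((norm (\<Delta> \<xi> \<omega>))\<^sup>2) \<partial>SQ.S) \<le> ennreal (Bn * (\<gamma>\<^sup>2 * (norm (e \<xi>))\<^sup>2) + C)"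
        using coupling[where ?z1.0="z \<xi>" and ?z2.0=zs and n=n] unfolding \<Delta>_def Bn_def C_def Sm_def zdiff by (simp add: mult.assoc)
      have dm: "(\<lambda>\<omega>. \<Delta> \<xi> \<omega>) \<in> borel_measurable SQ.S"
        unfolding \<Delta>_def using sgd_meas_S[where z="z \<xi>" and n=n] sgd_meas_S[where z=zs and n=n] by (rule borel_measurable_diff)
      have "(\<integral>\<^sup>+\<omega>. ennreal (L * norm (e \<xi>) * norm (\<Delta> \<xi> \<omega>)) \<partial>SQ.S)
          \<le> (\<integral>\<^sup>+\<omega>. ennreal ((L * lam / 2) * (norm (e \<xi>))\<^sup>2) + ennreal (L / (2 * lam)) * ennreal ((norm (\<Delta> \<xi> \<omega>))\<^sup>2) \<partial>SQ.S)"
      proof (intro nn_integral_mono)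
        fix \<omega>
        have "ennreal (L * norm (e \<xi>) * norm (\<Delta> \<xi> \<omega>)) \<le> ennreal ((L * lam / 2) * (norm (e \<xi>))\<^sup>2 + (L / (2 * lam)) * (norm (\<Delta> \<xi> \<omega>))\<^sup>2)"
          by (intro ennreal_leI amgm)
        also have "\<dots> = ennreal ((L * lam / 2) * (norm (e \<xi>))\<^sup>2) + ennreal (L / (2 * lam)) * ennreal ((norm (\<Delta> \<xi> \<omega>))\<^sup>2)"
        proof -
          have nnA: "0 \<le> (L * lam / 2) * (norm (e \<xi>))\<^sup>2" using L_nonneg lam0 by simp
          have nnB: "0 \<le> L / (2 * lam)" using L_nonneg lam0 by simp
          have nnD: "0 \<le> (norm (\<Delta> \<xi> \<omega>))\<^sup>2" by simp
          show ?thesis by (simp only: ennreal_plus[OF nnA mult_nonneg_nonneg[OF nnB nnD]] ennreal_mult[OF nnB nnD])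
        qed
        finally show "ennreal (L * norm (e \<xi>) * norm (\<Delta> \<xi> \<omega>)) \<le> \<dots>" .
      qed
      also have "\<dots> = ennreal ((L * lam / 2) * (norm (e \<xi>))\<^sup>2) + ennreal (L / (2 * lam)) * (\<integral>\<^sup>+\<omega>. ennreal ((norm (\<Delta> \<xi> \<omega>))\<^sup>2) \<partial>SQ.S)"
        using dm by (simp add: nn_integral_add nn_integral_cmult SQ.P.emeasure_space_1)
      also have "\<dots> \<le> ennreal ((L * lam / 2) * (norm (e \<xi>))\<^sup>2) + ennreal (L / (2 * lam)) * ennreal (Bn * (\<gamma>\<^sup>2 * (norm (e \<xi>))\<^sup>2) + C)"
        by (intro add_left_mono mult_left_mono cpl) auto
      also have "\<dots> = ennreal (K1 * (norm (e \<xi>))\<^sup>2 + K2)"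
      proof -
        have "ennreal ((L * lam / 2) * (norm (e \<xi>))\<^sup>2) + ennreal (L / (2 * lam)) * ennreal (Bn * (\<gamma>\<^sup>2 * (norm (e \<xi>))\<^sup>2) + C)
            = ennreal ((L * lam / 2) * (norm (e \<xi>))\<^sup>2 + (L / (2 * lam)) * (Bn * (\<gamma>\<^sup>2 * (norm (e \<xi>))\<^sup>2) + C))"
        proof -
          have nnA: "0 \<le> (L * lam / 2) * (norm (e \<xi>))\<^sup>2" using L_nonneg lam0 by simp
          have nnB: "0 \<le> L / (2 * lam)" using L_nonneg lam0 by simp
          have nnX: "0 \<le> Bn * (\<gamma>\<^sup>2 * (norm (e \<xi>))\<^sup>2) + C" using Bn0 C0 by simp
          show ?thesis by (simp only: ennreal_mult[OF nnB nnX, symmetric] ennreal_plus[OF nnA mult_nonneg_nonneg[OF nnB nnX], symmetric])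
        qed
        also have "(L * lam / 2) * (norm (e \<xi>))\<^sup>2 + (L / (2 * lam)) * (Bn * (\<gamma>\<^sup>2 * (norm (e \<xi>))\<^sup>2) + C) = K1 * (norm (e \<xi>))\<^sup>2 + K2"
          unfolding K1_def K2_def by (simp add: algebra_simps)
        finally show ?thesis .
      qed
      finally show ?thesis .
    qed
    have esq: "(\<integral>\<^sup>+\<xi>. ennreal ((norm (e \<xi>))\<^sup>2) \<partial>D) \<le> ennreal (\<rho>\<^sup>2)"
      unfolding e_def by (rule variance)
    have final_num: "K1 * \<rho>\<^sup>2 + K2 \<le> r"
    proof -
      have nb: "Bn + 4 * Sm \<le> 9 * (real t)\<^sup>2"
        using numeric[of "\<gamma> * L" n] cL \<gamma>_le tn unfolding Bn_def Sm_def by (simp add: add.commute)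
      have "K1 * \<rho>\<^sup>2 + K2 = L / (2 * lam) * (lam\<^sup>2 * \<rho>\<^sup>2 + \<gamma>\<^sup>2 * \<rho>\<^sup>2 * (Bn + 4 * Sm))"
        unfolding K1_def K2_def C_def using lam0 by (simp add: field_simps power2_eq_square)
      also have "\<dots> \<le> L / (2 * lam) * (lam\<^sup>2 * \<rho>\<^sup>2 + \<gamma>\<^sup>2 * \<rho>\<^sup>2 * (9 * (real t)\<^sup>2))"
        using nb L_nonneg lam0 by (intro mult_left_mono add_left_mono) auto
      also have "\<dots> = r"
      proof -
        have tpos: "0 < real t" using tn by simp
        show ?thesis unfolding r_def lam_def using \<gamma>_pos tpos by (simp add: field_simps power2_eq_square)
      qed
      finally show ?thesis .
    qed
    have "(\<integral>\<^sup>+\<omega>. ennreal (\<integral>\<xi>. \<Phi> \<xi> \<omega> \<partial>D) \<partial>SQ.S)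
        \<le> (\<integral>\<^sup>+\<omega>. \<integral>\<^sup>+\<xi>. ennreal (L * norm (e \<xi>) * norm (\<Delta> \<xi> \<omega>)) \<partial>D \<partial>SQ.S)"
    proof (rule nn_integral_mono_AE)
      show "AE \<omega> in SQ.S. ennreal (\<integral>\<xi>. \<Phi> \<xi> \<omega> \<partial>D) \<le> (\<integral>\<^sup>+\<xi>. ennreal (L * norm (e \<xi>) * norm (\<Delta> \<xi> \<omega>)) \<partial>D)"
        using AEint by eventually_elim (rule pt)
    qed
    also have "\<dots> = (\<integral>\<^sup>+\<xi>. \<integral>\<^sup>+\<omega>. ennreal (L * norm (e \<xi>) * norm (\<Delta> \<xi> \<omega>)) \<partial>SQ.S \<partial>D)"
      using PS.nn_integral_snd[OF G_meas] SQ.P.nn_integral_fst[OF G_meas] by simp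
    also have "\<dots> \<le> (\<integral>\<^sup>+\<xi>. ennreal (K1 * (norm (e \<xi>))\<^sup>2 + K2) \<partial>D)"
      by (intro nn_integral_mono inner)
    also have "\<dots> = ennreal K1 * (\<integral>\<^sup>+\<xi>. ennreal ((norm (e \<xi>))\<^sup>2) \<partial>D) + ennreal K2"
    proof -
      have "(\<integral>\<^sup>+\<xi>. ennreal (K1 * (norm (e \<xi>))\<^sup>2 + K2) \<partial>D) = (\<integral>\<^sup>+\<xi>. ennreal K1 * ennreal ((norm (e \<xi>))\<^sup>2) + ennreal K2 \<partial>D)"
        using K10 K20 by (intro nn_integral_cong) (simp add: ennreal_plus ennreal_mult)
      also have "\<dots> = ennreal K1 * (\<integral>\<^sup>+\<xi>. ennreal ((norm (e \<xi>))\<^sup>2) \<partial>D) + ennreal K2"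
        by (simp add: nn_integral_add nn_integral_cmult SQ.M.emeasure_space_1)
      finally show ?thesis .
    qed
    also have "\<dots> \<le> ennreal K1 * ennreal (\<rho>\<^sup>2) + ennreal K2"
      by (intro add_right_mono mult_left_mono esq) auto
    also have "\<dots> = ennreal (K1 * \<rho>\<^sup>2 + K2)"
      using K10 K20 by (simp add: ennreal_plus ennreal_mult)
    also have "\<dots> \<le> ennreal r" using final_num by (rule ennreal_leI)
    finally have "(\<integral>\<^sup>+\<omega>. ennreal (\<integral>\<xi>. \<Phi> \<xi> \<omega> \<partial>D) \<partial>SQ.S) \<le> ennreal r" .
    then have "(\<integral>\<omega>. (\<integral>\<xi>. \<Phi> \<xi> \<omega> \<partial>D) \<partial>SQ.S) \<le> r" by (rule integral_real_bounded[OF r0])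
    then show ?thesis using eq by simp
  qed
  then show ?thesis using step1 step2 unfolding F_def e_def r_def by simp
qed

end

theorem lemma7:
  fixes f :: "'a::euclidean_space \<Rightarrow> real"
    and grad :: "'a \<Rightarrow> 'a"
    and D :: "'b measure"
    and g :: "'b \<Rightarrow> 'a \<Rightarrow> 'a"
    and L \<rho> \<gamma> :: real and t :: nat and x0 :: 'a
  assumes grad: "\<And>x. (f has_derivative (\<lambda>h. grad x \<bullet> h)) (at x)"
    and smooth: "L-lipschitz_on UNIV grad"
    and D: "prob_space D"
    and g_meas: "(\<lambda>(\<xi>, x). g \<xi> x) \<in> borel_measurable (D \<Otimes>\<^sub>M borel)"
    and unbiased: "\<And>x. has_bochner_integral D (\<lambda>\<xi>. g \<xi> x) (grad x)"
    and variance: "\<And>x. (\<integral>\<^sup>+ \<xi>. ennreal ((norm (g \<xi> x - grad x))\<^sup>2) \<partial>D) \<le> ennreal (\<rho>\<^sup>2)"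
    and t: "t \<ge> 1"
    and \<gamma>_pos: "0 < \<gamma>"
    and \<gamma>_le: "\<gamma> * L * (real t - 1) \<le> 1"
  shows "(\<integral>\<omega>. (g (\<omega> 0) x0 - grad x0) \<bullet> grad (sgd_iter g \<gamma> x0 \<omega> t)
            \<partial>(PiM {..<t} (\<lambda>_. D)))
         \<le> 3 * real t * \<gamma> * L * \<rho>\<^sup>2"
proof -
  interpret sgd grad D g L \<rho> \<gamma>
    by (rule sgd.intro[OF smooth D g_meas unbiased variance \<gamma>_pos])
  show ?thesis by (rule main[OF t \<gamma>_le])
qed

end
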